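(* Let $\mathcal{H} = \mathcal{H}_{1}\otimes\cdots\otimes\mathcal{H}_{n}$ be a tensor product of finite-dimensional complex Hilbert spaces, let $\ket{\psi}\in\mathcal{H}$ be a unit vector and $\rho=\ket{\psi}\bra{\psi}$. Then for each $k = 1,\dots,n-1$, $$\dim\big(\Omega^k(\rho)\big) = \dim\big(\Omega^{n-k}(\rho)\big).$$
   Context: For $I\subseteq\{1,\dots,n\}$, let $\mathcal{H}_I=\bigotimes_{i\in I}\mathcal{H}_i$ (factors in increasing order), $\rho_I = \mathrm{tr}_{I^C}(\rho)$ the reduced density matrix (partial trace over the complementary factors), and $s_I$ the orthogonal projection of $\mathcal{H}_I$ onto $\mathrm{im}(\rho_I)$ (the support projection). For a linear operator $\mathcal{O}$ on $\mathcal{H}_I$ its restriction is $\mathcal{O}|_{\rho_I} = s_I\mathcal{O}s_I$. For $1\le k\le n$, the space of entanglement $k$-forms is the complex vector space $$\Omega^k(\rho) = \prod_{I\subseteq\{1,\dots,n\},\ |I|=k}\{\, s_I\mathcal{O}s_I \;:\; \mathcal{O}\text{ a linear operator on }\mathcal{H}_I\},$$ i.e. tuples (indexed by the $k$-element subsets, lexicographically ordered) of restricted operators. *)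

theory Defs
  imports Complex_Main "HOL-Library.Function_Algebras"
begin

text \<open>Tensor factors are indexed by 1..n; factor i has dimension d i.
 A basis vector of H_I is a multi-index x :: nat => nat with x i < d i for i in I and
 x i = 0 for i not in I. Vectors of H_I are complex functions on multi-indices vanishing
 outside cfg I; linear operators on H_I are complex matrices indexed by cfg I x cfg I
 (vanishing outside). The order of factors is irrelevant for dimensions.\<close>

type_synonym midx = "nat \<Rightarrow> nat"
type_synonym op = "midx \<Rightarrow> midx \<Rightarrow> complex"

definition cfg :: "(nat \<Rightarrow> nat) \<Rightarrow> nat set \<Rightarrow> midx set" where
  "cfg d I = {x. \<forall>i. (i \<in> I \<longrightarrow> x i < d i) \<and> (i \<notin> I \<longrightarrow> x i = 0)}"

definition merge :: "nat set \<Rightarrow> midx \<Rightarrow> midx \<Rightarrow> midx" where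
  "merge I x z = (\<lambda>i. if i \<in> I then x i else z i)"

definition vecs :: "(nat \<Rightarrow> nat) \<Rightarrow> nat set \<Rightarrow> (midx \<Rightarrow> complex) set" where
  "vecs d I = {v. \<forall>x. x \<notin> cfg d I \<longrightarrow> v x = 0}"

definition ops :: "(nat \<Rightarrow> nat) \<Rightarrow> nat set \<Rightarrow> op set" where
  "ops d I = {A. \<forall>x y. (x \<notin> cfg d I \<or> y \<notin> cfg d I) \<longrightarrow> A x y = 0}"

definition app :: "(nat \<Rightarrow> nat) \<Rightarrow> nat set \<Rightarrow> op \<Rightarrow> (midx \<Rightarrow> complex) \<Rightarrow> (midx \<Rightarrow> complex)" where
  "app d I A v = (\<lambda>x. if x \<in> cfg d I then (\<Sum>y\<in>cfg d I. A x y * v y) else 0)"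

definition mmul :: "(nat \<Rightarrow> nat) \<Rightarrow> nat set \<Rightarrow> op \<Rightarrow> op \<Rightarrow> op" where
  "mmul d I A B = (\<lambda>x y. if x \<in> cfg d I \<and> y \<in> cfg d I
      then (\<Sum>z\<in>cfg d I. A x z * B z y) else 0)"

definition inner_I :: "(nat \<Rightarrow> nat) \<Rightarrow> nat set \<Rightarrow> (midx \<Rightarrow> complex) \<Rightarrow> (midx \<Rightarrow> complex) \<Rightarrow> complex" where
  "inner_I d I v w = (\<Sum>x\<in>cfg d I. cnj (v x) * w x)"

definition img :: "(nat \<Rightarrow> nat) \<Rightarrow> nat set \<Rightarrow> op \<Rightarrow> (midx \<Rightarrow> complex) set" where
  "img d I A = app d I A ` vecs d I"

definition orth_proj :: "(nat \<Rightarrow> nat) \<Rightarrow> nat set \<Rightarrow> (midx \<Rightarrow> complex) set \<Rightarrow> op" where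
  "orth_proj d I W = (THE P. P \<in> ops d I \<and>
     (\<forall>v\<in>vecs d I. app d I P v \<in> W \<and> (\<forall>w\<in>W. inner_I d I w (v - app d I P v) = 0)))"

definition ptrace :: "nat \<Rightarrow> (nat \<Rightarrow> nat) \<Rightarrow> nat set \<Rightarrow> op \<Rightarrow> op" where
  "ptrace n d I R = (\<lambda>x y. if x \<in> cfg d I \<and> y \<in> cfg d I
      then (\<Sum>z\<in>cfg d ({1..n} - I). R (merge I x z) (merge I y z)) else 0)"

definition pure_state :: "(midx \<Rightarrow> complex) \<Rightarrow> op" where
  "pure_state psi = (\<lambda>a b. psi a * cnj (psi b))"

definition supp_proj :: "nat \<Rightarrow> (nat \<Rightarrow> nat) \<Rightarrow> op \<Rightarrow> nat set \<Rightarrow> op" where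
  "supp_proj n d rho I = orth_proj d I (img d I (ptrace n d I rho))"

definition restrict_op :: "nat \<Rightarrow> (nat \<Rightarrow> nat) \<Rightarrow> op \<Rightarrow> nat set \<Rightarrow> op \<Rightarrow> op" where
  "restrict_op n d rho I B =
     mmul d I (mmul d I (supp_proj n d rho I) B) (supp_proj n d rho I)"

definition Omega :: "nat \<Rightarrow> (nat \<Rightarrow> nat) \<Rightarrow> op \<Rightarrow> nat \<Rightarrow> (nat set \<Rightarrow> op) set" where
  "Omega n d rho k = {F. \<forall>I.
     (I \<subseteq> {1..n} \<and> card I = k \<longrightarrow> (\<exists>B \<in> ops d I. F I = restrict_op n d rho I B)) \<and>
     (\<not> (I \<subseteq> {1..n} \<and> card I = k) \<longrightarrow> F I = (\<lambda>x y. 0))}"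

definition cscale :: "complex \<Rightarrow> (nat set \<Rightarrow> op) \<Rightarrow> (nat set \<Rightarrow> op)" where
  "cscale c F = (\<lambda>I x y. c * F I x y)"

definition cdim :: "(nat set \<Rightarrow> op) set \<Rightarrow> nat" where
  "cdim V = vector_space.dim cscale V"

end

theory Submission
  imports Defs
begin


lemma finite_cfg:
  assumes "finite I" shows "finite (cfg d I)"
proof -
  let ?S = "{f. \<forall>x. (x \<in> I \<longrightarrow> f x \<in> {..<sum d I}) \<and> (x \<notin> I \<longrightarrow> f x = (0::nat))}"
  have "cfg d I \<subseteq> ?S"
  proof
    fix f assume "f \<in> cfg d I"
    hence h: "\<forall>i. (i \<in> I \<longrightarrow> f i < d i) \<and> (i \<notin> I \<longrightarrow> f i = 0)" by (simp add: cfg_def)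
    have "\<forall>i\<in>I. d i \<le> sum d I" using assms by (simp add: member_le_sum)
    with h show "f \<in> ?S" by fastforce
  qed
  moreover have "finite ?S" by (rule finite_set_of_finite_funs) (use assms in auto)
  ultimately show ?thesis by (rule finite_subset)
qed

definition ap :: "midx set \<Rightarrow> op \<Rightarrow> (midx \<Rightarrow> complex) \<Rightarrow> (midx \<Rightarrow> complex)" where
  "ap C A v = (\<lambda>x. if x \<in> C then (\<Sum>y\<in>C. A x y * v y) else 0)"

definition ip :: "midx set \<Rightarrow> (midx \<Rightarrow> complex) \<Rightarrow> (midx \<Rightarrow> complex) \<Rightarrow> complex" where
  "ip C v w = (\<Sum>x\<in>C. cnj (v x) * w x)"

definition vecsC :: "midx set \<Rightarrow> (midx \<Rightarrow> complex) set" where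
  "vecsC C = {v. \<forall>x. x \<notin> C \<longrightarrow> v x = 0}"

definition opsC :: "midx set \<Rightarrow> op set" where
  "opsC C = {A. \<forall>x y. (x \<notin> C \<or> y \<notin> C) \<longrightarrow> A x y = 0}"

definition isproj :: "midx set \<Rightarrow> (midx \<Rightarrow> complex) set \<Rightarrow> op \<Rightarrow> bool" where
  "isproj C W P \<longleftrightarrow> P \<in> opsC C \<and>
     (\<forall>v\<in>vecsC C. ap C P v \<in> W \<and> (\<forall>w\<in>W. ip C w (v - ap C P v) = 0))"

lemma app_ap: "app d I = ap (cfg d I)" by (simp add: fun_eq_iff app_def ap_def)
lemma inner_ip: "inner_I d I = ip (cfg d I)" by (simp add: fun_eq_iff inner_I_def ip_def)
lemma vecs_C: "vecs d I = vecsC (cfg d I)" by (simp add: vecs_def vecsC_def)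
lemma ops_C: "ops d I = opsC (cfg d I)" by (simp add: ops_def opsC_def)
lemma orth_proj_C: "orth_proj d I W = (THE P. isproj (cfg d I) W P)"
  by (simp add: orth_proj_def isproj_def app_ap inner_ip vecs_C ops_C)
lemma img_C: "img d I R = ap (cfg d I) R ` vecsC (cfg d I)"
  by (simp add: img_def app_ap vecs_C)

lemma ip_add_right: "ip C u (v + w) = ip C u v + ip C u w"
  by (simp add: ip_def distrib_left sum.distrib)
lemma ip_diff_right: "ip C u (v - w) = ip C u v - ip C u w"
  by (simp add: ip_def right_diff_distrib sum_subtractf)
lemma ip_add_left: "ip C (v + w) u = ip C v u + ip C w u"
  by (simp add: ip_def distrib_right sum.distrib)
lemma ip_diff_left: "ip C (v - w) u = ip C v u - ip C w u"
  by (simp add: ip_def left_diff_distrib sum_subtractf)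
lemma ip_scale_left: "ip C (\<lambda>x. c * v x) u = cnj c * ip C v u"
  by (simp add: ip_def sum_distrib_left mult.assoc)
lemma ip_scale_right: "ip C u (\<lambda>x. c * v x) = c * ip C u v"
  by (simp add: ip_def sum_distrib_left mult_ac)
lemma ip_cnj: "ip C u v = cnj (ip C v u)"
  by (simp add: ip_def mult.commute)

lemma cnj_mult_self: "cnj z * z = complex_of_real ((cmod z)\<^sup>2)"
  by (metis complex_norm_square mult.commute)

lemma ip_self_zero:
  assumes "finite C" "ip C v v = 0" "x \<in> C" shows "v x = 0"
proof -
  have "ip C v v = complex_of_real (\<Sum>y\<in>C. (cmod (v y))\<^sup>2)"
    by (simp only: ip_def cnj_mult_self of_real_sum)
  hence "(\<Sum>y\<in>C. (cmod (v y))\<^sup>2) = 0" using assms(2) by (metis of_real_eq_0_iff)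
  hence "\<forall>y\<in>C. (cmod (v y))\<^sup>2 = 0" using assms(1) by (subst (asm) sum_nonneg_eq_0_iff) auto
  thus ?thesis using assms(3) by simp
qed

lemma ap_add: "ap C P (v + w) = ap C P v + ap C P w"
  by (simp add: ap_def fun_eq_iff distrib_left sum.distrib)
lemma ap_diff: "ap C P (v - w) = ap C P v - ap C P w"
  by (simp add: ap_def fun_eq_iff right_diff_distrib sum_subtractf)
lemma ap_scale: "ap C P (\<lambda>x. c * v x) = (\<lambda>x. c * ap C P v x)"
  by (simp add: ap_def fun_eq_iff sum_distrib_left mult_ac)

definition cs :: "midx set \<Rightarrow> op \<Rightarrow> midx set \<Rightarrow> (midx \<Rightarrow> complex) set" where
  "cs C R Y = range (\<lambda>c. (\<lambda>x. if x \<in> C then (\<Sum>y\<in>Y. R x y * c y) else 0))"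

definition col :: "midx set \<Rightarrow> op \<Rightarrow> midx \<Rightarrow> (midx \<Rightarrow> complex)" where
  "col C R y = (\<lambda>x. if x \<in> C then R x y else 0)"

lemma cs_add: "u \<in> cs C R Y \<Longrightarrow> w \<in> cs C R Y \<Longrightarrow> u + w \<in> cs C R Y"
proof -
  assume "u \<in> cs C R Y" "w \<in> cs C R Y"
  then obtain a b where "u = (\<lambda>x. if x \<in> C then (\<Sum>y\<in>Y. R x y * a y) else 0)"
     "w = (\<lambda>x. if x \<in> C then (\<Sum>y\<in>Y. R x y * b y) else 0)" by (auto simp: cs_def)
  hence "u + w = (\<lambda>x. if x \<in> C then (\<Sum>y\<in>Y. R x y * (\<lambda>y. a y + b y) y) else 0)"
    by (simp add: fun_eq_iff distrib_left sum.distrib)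
  thus ?thesis unfolding cs_def by (intro range_eqI[where x="\<lambda>y. a y + b y"]) simp
qed

lemma cs_scale: "u \<in> cs C R Y \<Longrightarrow> (\<lambda>x. a * u x) \<in> cs C R Y"
proof -
  assume "u \<in> cs C R Y"
  then obtain b where "u = (\<lambda>x. if x \<in> C then (\<Sum>y\<in>Y. R x y * b y) else 0)"
    by (auto simp: cs_def)
  hence "(\<lambda>x. a * u x) = (\<lambda>x. if x \<in> C then (\<Sum>y\<in>Y. R x y * (\<lambda>y. a * b y) y) else 0)"
    by (simp add: fun_eq_iff sum_distrib_left mult_ac)
  thus ?thesis unfolding cs_def by (intro range_eqI[where x="\<lambda>y. a * b y"]) simp
qed

lemma cs_diff: "u \<in> cs C R Y \<Longrightarrow> w \<in> cs C R Y \<Longrightarrow> u - w \<in> cs C R Y"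
proof -
  assume a: "u \<in> cs C R Y" "w \<in> cs C R Y"
  have "u - w = u + (\<lambda>x. (-1) * w x)" by (simp add: fun_eq_iff)
  thus ?thesis using a cs_add cs_scale by metis
qed

lemma cs_zero_out: "u \<in> cs C R Y \<Longrightarrow> x \<notin> C \<Longrightarrow> u x = 0"
  by (auto simp: cs_def)

lemma cs_mono:
  assumes "finite Y" "y \<notin> Y" shows "cs C R Y \<subseteq> cs C R (insert y Y)"
proof
  fix u assume "u \<in> cs C R Y"
  then obtain b where u: "u = (\<lambda>x. if x \<in> C then (\<Sum>y\<in>Y. R x y * b y) else 0)"
    by (auto simp: cs_def)
  have "u = (\<lambda>x. if x \<in> C then (\<Sum>y'\<in>insert y Y. R x y' * (b(y := 0)) y') else 0)"
    unfolding u using assms by (intro ext) (auto intro!: sum.cong)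
  thus "u \<in> cs C R (insert y Y)" unfolding cs_def by blast
qed

lemma col_cs:
  assumes "finite Y" "y \<notin> Y" shows "col C R y \<in> cs C R (insert y Y)"
proof -
  have "col C R y = (\<lambda>x. if x \<in> C then (\<Sum>y'\<in>insert y Y. R x y' * ((\<lambda>_. 0)(y := 1)) y') else 0)"
    unfolding col_def using assms by (intro ext) (auto intro!: sum.neutral)
  thus ?thesis unfolding cs_def by blast
qed

lemma cs_decomp:
  assumes "finite Y" "y \<notin> Y" "w \<in> cs C R (insert y Y)"
  shows "\<exists>w0\<in>cs C R Y. \<exists>a. w = w0 + (\<lambda>x. a * col C R y x)"
proof -
  obtain b where w: "w = (\<lambda>x. if x \<in> C then (\<Sum>y\<in>insert y Y. R x y * b y) else 0)"
    using assms(3) by (auto simp: cs_def)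
  let ?w0 = "(\<lambda>x. if x \<in> C then (\<Sum>y\<in>Y. R x y * b y) else 0)"
  have "w = ?w0 + (\<lambda>x. b y * col C R y x)"
    unfolding w col_def using assms by (auto simp: fun_eq_iff)
  moreover have "?w0 \<in> cs C R Y" unfolding cs_def by blast
  ultimately show ?thesis by blast
qed



lemma gs:
  assumes fC: "finite C" and fY: "finite Y"
  shows "\<exists>P\<in>opsC C. \<forall>v. ap C P v \<in> cs C R Y \<and> (\<forall>w\<in>cs C R Y. ip C w (v - ap C P v) = 0)"
using fY proof (induction Y rule: finite_induct)
  case empty
  have e0: "(\<lambda>c x. if x \<in> C then (\<Sum>y\<in>{}. R x y * c y) else (0::complex)) = (\<lambda>c x. 0)"
    by (intro ext) simp
  have e1: "cs C R {} = {\<lambda>x. 0}" unfolding cs_def e0 by auto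
  have e2: "\<And>v. ap C (\<lambda>x y. 0) v = (\<lambda>x. 0)" by (intro ext) (simp add: ap_def)
  show ?case
    by (rule bexI[of _ "\<lambda>x y. 0"]) (simp_all add: e1 e2 ip_def opsC_def)
next
  case (insert y Y)
  obtain P where P: "P \<in> opsC C" and Pv: "\<And>v. ap C P v \<in> cs C R Y"
    and Po: "\<And>v w. w \<in> cs C R Y \<Longrightarrow> ip C w (v - ap C P v) = 0" using insert.IH by blast
  define u where "u = col C R y - ap C P (col C R y)"
  define nrm where "nrm = ip C u u"
  have mono: "cs C R Y \<subseteq> cs C R (insert y Y)" using cs_mono insert by blast
  have colin: "col C R y \<in> cs C R (insert y Y)" using col_cs insert by blast
  have uin: "u \<in> cs C R (insert y Y)" unfolding u_def using cs_diff colin mono Pv by blast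
  have uout: "\<And>x. x \<notin> C \<Longrightarrow> u x = 0" using cs_zero_out uin by blast
  show ?case
  proof (cases "nrm = 0")
    case True
    note nz = True
    have u0: "u x = 0" for x
    proof (cases "x \<in> C")
      case True thus ?thesis using ip_self_zero[OF fC, of u x] nz unfolding nrm_def by simp
    next
      case False thus ?thesis using uout by simp
    qed
    hence colY: "col C R y = ap C P (col C R y)" by (intro ext) (simp add: u_def)
    have csI: "cs C R (insert y Y) \<subseteq> cs C R Y"
    proof
      fix w assume "w \<in> cs C R (insert y Y)"
      then obtain w0 a where w0: "w0 \<in> cs C R Y" and w: "w = w0 + (\<lambda>x. a * col C R y x)"
        using cs_decomp[OF insert(1) insert(2)] by blast
      have "col C R y \<in> cs C R Y" by (subst colY) (rule Pv)
      thus "w \<in> cs C R Y" unfolding w by (intro cs_add[OF w0] cs_scale)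
    qed
    show ?thesis
    proof (intro bexI[of _ P] allI conjI ballI)
      fix v show "ap C P v \<in> cs C R (insert y Y)" using Pv mono by blast
      fix w assume "w \<in> cs C R (insert y Y)"
      hence "w \<in> cs C R Y" using csI by blast
      thus "ip C w (v - ap C P v) = 0" by (rule Po)
    qed (rule P)
  next
    case False
    define P' where "P' = (\<lambda>a b. P a b + u a * cnj (u b) * inverse nrm)"
    have P'ops: "P' \<in> opsC C" using P uout by (auto simp: opsC_def P'_def)
    have apP': "\<And>v. ap C P' v = ap C P v + (\<lambda>x. (ip C u v / nrm) * u x)"
    proof (intro ext)
      fix v x
      show "ap C P' v x = (ap C P v + (\<lambda>x. (ip C u v / nrm) * u x)) x"
      proof (cases "x \<in> C")
        case True
        have "(\<Sum>y\<in>C. (P x y + u x * cnj (u y) * inverse nrm) * v y)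
           = (\<Sum>y\<in>C. P x y * v y) + u x * (\<Sum>y\<in>C. cnj (u y) * v y) * inverse nrm"
          by (simp add: ring_distribs sum.distrib sum_distrib_left mult_ac)
        thus ?thesis using True by (simp add: ap_def P'_def ip_def divide_inverse mult_ac)
      qed (simp add: ap_def uout)
    qed
    show ?thesis
    proof (intro bexI[of _ P'] allI conjI ballI)
      fix v
      show "ap C P' v \<in> cs C R (insert y Y)" unfolding apP' using cs_add cs_scale uin mono Pv by blast
      fix w assume "w \<in> cs C R (insert y Y)"
      then obtain w0 a where w0: "w0 \<in> cs C R Y" and w: "w = w0 + (\<lambda>x. a * col C R y x)"
        using cs_decomp insert by blast
      define w1 where "w1 = w0 + (\<lambda>x. a * ap C P (col C R y) x)"
      have w1: "w1 \<in> cs C R Y" using cs_add cs_scale w0 Pv unfolding w1_def by blast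
      have ww: "w = w1 + (\<lambda>x. a * u x)" unfolding w w1_def u_def by (intro ext) (simp add: algebra_simps)
      define \<alpha> where "\<alpha> = ip C u v / nrm"
      have e1: "ip C w1 (v - ap C P v) = 0" using Po w1 by blast
      have e2: "ip C w1 u = 0" using Po[OF w1, of "col C R y"] by (simp add: u_def)
      have e3: "ip C u (ap C P v) = 0" using Po[OF Pv[of v], of "col C R y"] ip_cnj[of C u]
        by (simp add: u_def)
      have vv: "v - ap C P' v = (v - ap C P v) - (\<lambda>x. \<alpha> * u x)" by (intro ext) (simp add: apP' \<alpha>_def)
      have "ip C w (v - ap C P' v) = ip C w1 (v - ap C P v) - \<alpha> * ip C w1 u
           + cnj a * (ip C u v - ip C u (ap C P v) - \<alpha> * nrm)"
        unfolding vv ww nrm_def by (simp only: ip_add_left ip_scale_left ip_diff_right ip_scale_right) (simp add: algebra_simps)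
      also have "\<dots> = 0" using e1 e2 e3 False by (simp add: \<alpha>_def)
      finally show "ip C w (v - ap C P' v) = 0" .
    qed (rule P'ops)
  qed
qed

lemma cs_img: "cs C R C = ap C R ` vecsC C"
proof
  show "cs C R C \<subseteq> ap C R ` vecsC C"
  proof
    fix u assume "u \<in> cs C R C"
    then obtain c where u: "u = (\<lambda>x. if x \<in> C then (\<Sum>y\<in>C. R x y * c y) else 0)" by (auto simp: cs_def)
    let ?v = "\<lambda>y. if y \<in> C then c y else 0"
    have "u = ap C R ?v" unfolding u ap_def by (intro ext) (auto intro!: sum.cong)
    moreover have "?v \<in> vecsC C" by (simp add: vecsC_def)
    ultimately show "u \<in> ap C R ` vecsC C" by blast
  qed
  show "ap C R ` vecsC C \<subseteq> cs C R C" unfolding cs_def ap_def by blast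
qed

lemma ap_delta: "y \<in> C \<Longrightarrow> finite C \<Longrightarrow> ap C P (\<lambda>z. if z = y then 1 else 0) = col C P y"
  by (intro ext) (simp add: ap_def col_def if_distrib[of "(*) _"] cong: if_cong)

lemma ip_delta: "y \<in> C \<Longrightarrow> finite C \<Longrightarrow> ip C u (\<lambda>z. if z = y then 1 else 0) = cnj (u y)"
  by (simp add: ip_def if_distrib[of "(*) _"] cong: if_cong)

lemma delta_vecs: "y \<in> C \<Longrightarrow> (\<lambda>z. if z = y then 1 else 0) \<in> vecsC C"
  by (auto simp: vecsC_def)

lemma proj_exists: "finite C \<Longrightarrow> \<exists>P. isproj C (ap C R ` vecsC C) P"
  using gs[of C C R] unfolding isproj_def cs_img by blast

lemma proj_unique:
  assumes fC: "finite C" and P: "isproj C (ap C R ` vecsC C) P" and Q: "isproj C (ap C R ` vecsC C) Q"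
  shows "P = Q"
proof (intro ext)
  fix x y
  show "P x y = Q x y"
  proof (cases "x \<in> C \<and> y \<in> C")
    case False thus ?thesis using P Q by (auto simp: isproj_def opsC_def)
  next
    case True
    let ?e = "\<lambda>z. if z = y then 1 else (0::complex)"
    have e: "?e \<in> vecsC C" using True delta_vecs by blast
    let ?t = "ap C P ?e - ap C Q ?e"
    have t: "?t \<in> ap C R ` vecsC C" unfolding cs_img[symmetric]
      using P Q e unfolding isproj_def cs_img[symmetric] by (blast intro: cs_diff)
    have h: "ip C ?t (?e - ap C Q ?e) = 0" "ip C ?t (?e - ap C P ?e) = 0"
      using P Q e t unfolding isproj_def by blast+
    have eq: "(?e - ap C Q ?e) - (?e - ap C P ?e) = ?t" by (intro ext) simp
    have "ip C ?t ((?e - ap C Q ?e) - (?e - ap C P ?e)) = 0"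
      using h by (simp only: ip_diff_right) simp
    hence "ip C ?t ?t = 0" unfolding eq .
    hence "?t x = 0" using ip_self_zero[OF fC] True by blast
    thus ?thesis using ap_delta[of y C] True fC by (simp add: col_def)
  qed
qed

lemma the_proj: assumes fC: "finite C"
  shows "isproj C (ap C R ` vecsC C) (THE P. isproj C (ap C R ` vecsC C) P)"
proof -
  obtain P where P: "isproj C (ap C R ` vecsC C) P" using proj_exists[OF fC] by blast
  show ?thesis
  proof (rule theI'[of "isproj C (ap C R ` vecsC C)"])
    show "\<exists>!P. isproj C (ap C R ` vecsC C) P"
      by (rule ex1I[of _ P]) (rule P, rule proj_unique[OF fC _ P])
  qed
qed

lemma proj_fix:
  assumes fC: "finite C" and P: "isproj C (ap C R ` vecsC C) P" and w: "w \<in> ap C R ` vecsC C"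
  shows "ap C P w = w"
proof -
  have "w \<in> cs C R C" using w cs_img by blast
  hence wv: "w \<in> vecsC C" using cs_zero_out unfolding vecsC_def by blast
  let ?t = "w - ap C P w"
  have t: "?t \<in> ap C R ` vecsC C" using P w wv unfolding isproj_def cs_img[symmetric] by (blast intro: cs_diff)
  hence "ip C ?t ?t = 0" using P wv unfolding isproj_def by blast
  hence "\<And>x. x \<in> C \<Longrightarrow> ?t x = 0" using ip_self_zero[OF fC] by blast
  moreover have "?t \<in> cs C R C" using t cs_img by blast
  hence "\<And>x. x \<notin> C \<Longrightarrow> ?t x = 0" using cs_zero_out by blast
  ultimately have "\<And>x. ?t x = 0" by blast
  thus ?thesis by (intro ext) (simp add: right_minus_eq)
qed

lemma proj_herm:
  assumes fC: "finite C" and P: "isproj C (ap C R ` vecsC C) P"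
  shows "P x y = cnj (P y x)"
proof (cases "x \<in> C \<and> y \<in> C")
  case False thus ?thesis using P by (auto simp: isproj_def opsC_def)
next
  case True
  let ?ex = "\<lambda>z. if z = x then 1 else (0::complex)"
  let ?ey = "\<lambda>z. if z = y then 1 else (0::complex)"
  let ?a = "ap C P ?ex" let ?b = "ap C P ?ey"
  have ex: "?ex \<in> vecsC C" "?ey \<in> vecsC C" using True delta_vecs by blast+
  have a: "?a \<in> ap C R ` vecsC C" "?b \<in> ap C R ` vecsC C" using P ex unfolding isproj_def by blast+
  have "ip C ?a (?ey - ?b) = 0" "ip C ?b (?ex - ?a) = 0" using P ex a unfolding isproj_def by blast+
  hence 1: "ip C ?a ?ey = ip C ?a ?b" and 2: "ip C ?b ?ex = ip C ?b ?a" by (simp_all add: ip_diff_right)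
  have "ip C ?a ?ey = cnj (P y x)" using True fC by (simp add: ip_delta ap_delta col_def)
  moreover have "ip C ?b ?ex = cnj (P x y)" using True fC by (simp add: ip_delta ap_delta col_def)
  ultimately have 3: "cnj (P y x) = ip C ?a ?b" "cnj (P x y) = cnj (ip C ?a ?b)"
    using 1 2 ip_cnj[of C ?b ?a] by simp_all
  hence "P x y = ip C ?a ?b" by simp
  thus ?thesis using 3(1) by simp
qed

lemma proj_idem:
  assumes fC: "finite C" and P: "isproj C (ap C R ` vecsC C) P"
  shows "(\<Sum>z\<in>C. P x z * P z y) = P x y"
proof (cases "x \<in> C \<and> y \<in> C")
  case False thus ?thesis using P by (auto simp: isproj_def opsC_def)
next
  case True
  let ?ey = "\<lambda>z. if z = y then 1 else (0::complex)"
  have "ap C P ?ey \<in> ap C R ` vecsC C" using P delta_vecs True unfolding isproj_def by blast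
  hence "col C P y \<in> ap C R ` vecsC C" using ap_delta[of y C P] True fC by simp
  hence "ap C P (col C P y) = col C P y" by (rule proj_fix[OF fC P])
  hence "ap C P (col C P y) x = col C P y x" by simp
  thus ?thesis using True by (simp add: ap_def col_def cong: sum.cong)
qed



lemma rearr:
  fixes f l :: "midx \<Rightarrow> complex" and g h k :: "midx \<Rightarrow> midx \<Rightarrow> complex"
  assumes "finite Z" "finite X"
  shows "(\<Sum>z2\<in>Z. (\<Sum>z1\<in>Z. f z1 * (\<Sum>x\<in>X. \<Sum>x'\<in>X. g z1 x * h x x' * k x' z2)) * l z2)
       = (\<Sum>x\<in>X. \<Sum>x'\<in>X. (\<Sum>z1\<in>Z. f z1 * g z1 x) * h x x' * (\<Sum>z2\<in>Z. k x' z2 * l z2))"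
proof -
  let ?T = "\<lambda>z2 z1 x x'. f z1 * g z1 x * h x x' * k x' z2 * l z2"
  have "(\<Sum>z2\<in>Z. (\<Sum>z1\<in>Z. f z1 * (\<Sum>x\<in>X. \<Sum>x'\<in>X. g z1 x * h x x' * k x' z2)) * l z2)
      = (\<Sum>z2\<in>Z. \<Sum>z1\<in>Z. \<Sum>x\<in>X. \<Sum>x'\<in>X. ?T z2 z1 x x')"
    by (simp add: sum_distrib_left sum_distrib_right mult.assoc)
  also have "\<dots> = (\<Sum>z1\<in>Z. \<Sum>z2\<in>Z. \<Sum>x\<in>X. \<Sum>x'\<in>X. ?T z2 z1 x x')"
    by (rule sum.swap)
  also have "\<dots> = (\<Sum>z1\<in>Z. \<Sum>x\<in>X. \<Sum>z2\<in>Z. \<Sum>x'\<in>X. ?T z2 z1 x x')"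
    by (rule sum.cong[OF refl], rule sum.swap)
  also have "\<dots> = (\<Sum>z1\<in>Z. \<Sum>x\<in>X. \<Sum>x'\<in>X. \<Sum>z2\<in>Z. ?T z2 z1 x x')"
    by (rule sum.cong[OF refl], rule sum.cong[OF refl], rule sum.swap)
  also have "\<dots> = (\<Sum>x\<in>X. \<Sum>z1\<in>Z. \<Sum>x'\<in>X. \<Sum>z2\<in>Z. ?T z2 z1 x x')"
    by (rule sum.swap)
  also have "\<dots> = (\<Sum>x\<in>X. \<Sum>x'\<in>X. \<Sum>z1\<in>Z. \<Sum>z2\<in>Z. ?T z2 z1 x x')"
    by (rule sum.cong[OF refl], rule sum.swap)
  also have "\<dots> = (\<Sum>x\<in>X. \<Sum>x'\<in>X. \<Sum>z2\<in>Z. \<Sum>z1\<in>Z. ?T z2 z1 x x')"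
    by (rule sum.cong[OF refl], rule sum.cong[OF refl], rule sum.swap)
  also have "\<dots> = (\<Sum>x\<in>X. \<Sum>x'\<in>X. (\<Sum>z1\<in>Z. f z1 * g z1 x) * h x x' * (\<Sum>z2\<in>Z. k x' z2 * l z2))"
    by (simp add: sum_distrib_left sum_distrib_right mult.assoc)
  finally show ?thesis .
qed

definition gram :: "midx set \<Rightarrow> midx set \<Rightarrow> op \<Rightarrow> op" where
  "gram C D L = (\<lambda>c c'. if c \<in> C \<and> c' \<in> C then (\<Sum>e\<in>D. L c e * cnj (L c' e)) else 0)"

lemma gram_img:
  assumes "finite C" "finite D" "w \<in> ap C (gram C D L) ` vecsC C"
  shows "\<exists>a. \<forall>c\<in>C. w c = (\<Sum>e\<in>D. L c e * a e)"
proof -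
  obtain v where w: "w = ap C (gram C D L) v" using assms(3) by blast
  show ?thesis
  proof (intro exI ballI)
    fix c assume c: "c \<in> C"
    have "w c = (\<Sum>c'\<in>C. (\<Sum>e\<in>D. L c e * cnj (L c' e)) * v c')"
      using c by (simp add: w ap_def gram_def)
    also have "\<dots> = (\<Sum>e\<in>D. L c e * (\<Sum>c'\<in>C. cnj (L c' e) * v c'))"
      by (simp add: sum_distrib_left sum_distrib_right mult.assoc) (rule sum.swap)
    finally show "w c = (\<Sum>e\<in>D. L c e * (\<lambda>e. \<Sum>c'\<in>C. cnj (L c' e) * v c') e)" by simp
  qed
qed

lemma gram_form:
  assumes fC: "finite C" and fD: "finite D"
  shows "ip C (ap C (gram C D L) t) t = ip D (\<lambda>e. \<Sum>c\<in>C. cnj (L c e) * t c) (\<lambda>e. \<Sum>c\<in>C. cnj (L c e) * t c)"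
proof -
  have "ip C (ap C (gram C D L) t) t = (\<Sum>c\<in>C. cnj (\<Sum>c'\<in>C. (\<Sum>e\<in>D. L c e * cnj (L c' e)) * t c') * t c)"
    by (simp add: ip_def ap_def gram_def)
  also have "\<dots> = (\<Sum>c\<in>C. \<Sum>c'\<in>C. \<Sum>e\<in>D. (cnj (L c e) * t c) * (L c' e * cnj (t c')))"
    by (simp add: sum_distrib_left sum_distrib_right mult_ac)
  also have "\<dots> = (\<Sum>c\<in>C. \<Sum>e\<in>D. \<Sum>c'\<in>C. (cnj (L c e) * t c) * (L c' e * cnj (t c')))"
    by (rule sum.cong[OF refl], rule sum.swap)
  also have "\<dots> = (\<Sum>e\<in>D. \<Sum>c\<in>C. \<Sum>c'\<in>C. (cnj (L c e) * t c) * (L c' e * cnj (t c')))"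
    by (rule sum.swap)
  also have "\<dots> = (\<Sum>e\<in>D. \<Sum>c'\<in>C. \<Sum>c\<in>C. (cnj (L c e) * t c) * (L c' e * cnj (t c')))"
    by (rule sum.cong[OF refl], rule sum.swap)
  also have "\<dots> = ip D (\<lambda>e. \<Sum>c\<in>C. cnj (L c e) * t c) (\<lambda>e. \<Sum>c\<in>C. cnj (L c e) * t c)"
    by (simp add: ip_def sum_distrib_left sum_distrib_right mult_ac)
  finally show ?thesis .
qed

lemma gram_col:
  assumes fC: "finite C" and fD: "finite D"
    and P: "isproj C (ap C (gram C D L) ` vecsC C) P" and e0: "e0 \<in> D" and c: "c \<in> C"
  shows "(\<Sum>c'\<in>C. P c c' * L c' e0) = L c e0"
proof -
  let ?W = "ap C (gram C D L) ` vecsC C"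
  define v where "v = (\<lambda>c. if c \<in> C then L c e0 else 0)"
  have v: "v \<in> vecsC C" by (simp add: v_def vecsC_def)
  define t where "t = v - ap C P v"
  have t: "t \<in> vecsC C" using v by (simp add: t_def vecsC_def ap_def)
  have Pv: "ap C P v \<in> ?W" and orth: "\<And>w. w \<in> ?W \<Longrightarrow> ip C w t = 0"
    using P v unfolding isproj_def t_def by blast+
  define g where "g = (\<lambda>e. \<Sum>c\<in>C. cnj (L c e) * t c)"
  have "ip C (ap C (gram C D L) t) t = 0" using orth t by blast
  hence "ip D g g = 0" unfolding g_def gram_form[OF fC fD] .
  hence g0: "g e0 = 0" using ip_self_zero[OF fD] e0 by blast
  have "ip C t v = cnj (g e0)"
    by (simp add: ip_def g_def v_def mult.commute cong: sum.cong)
  hence 1: "ip C t v = 0" using g0 by simp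
  have "ip C (ap C P v) t = 0" using orth Pv by blast
  hence 2: "ip C t (ap C P v) = 0" using ip_cnj[of C t "ap C P v"] by simp
  have "ip C t t = 0" using 1 2 by (simp add: t_def[symmetric] ip_diff_right[of C t v "ap C P v", folded t_def])
  hence "t c = 0" using ip_self_zero[OF fC] c by blast
  hence "v c = ap C P v c" by (simp add: t_def)
  thus ?thesis using c by (simp add: v_def ap_def if_distrib[of "(*) _"] cong: sum.cong if_cong)
qed



lemma merge_swap:
  assumes "x \<in> cfg d I" "z \<in> cfg d J" "I \<inter> J = {}"
  shows "merge J z x = merge I x z"
  using assms by (intro ext) (auto simp: merge_def cfg_def)

lemma dd: "I \<subseteq> {1..n} \<Longrightarrow> {1..n} - ({1..n} - I) = (I::nat set)" by auto

lemma ptrace_I: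
  "ptrace n d I (pure_state psi) = gram (cfg d I) (cfg d ({1..n}-I)) (\<lambda>x z. psi (merge I x z))"
  by (intro ext) (simp add: ptrace_def gram_def pure_state_def)

lemma ptrace_J:
  assumes "I \<subseteq> {1..n}"
  shows "ptrace n d ({1..n}-I) (pure_state psi) = gram (cfg d ({1..n}-I)) (cfg d I) (\<lambda>z x. psi (merge I x z))"
proof (intro ext)
  fix z w
  show "ptrace n d ({1..n}-I) (pure_state psi) z w = gram (cfg d ({1..n}-I)) (cfg d I) (\<lambda>z x. psi (merge I x z)) z w"
    unfolding ptrace_def gram_def pure_state_def dd[OF assms]
    by (auto intro!: sum.cong simp: merge_swap Int_Diff)
qed

lemma sp_proj:
  assumes "finite I"
  shows "isproj (cfg d I) (ap (cfg d I) (ptrace n d I rho) ` vecsC (cfg d I)) (supp_proj n d rho I)"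
  unfolding supp_proj_def orth_proj_C img_C by (rule the_proj[OF finite_cfg[OF assms]])

lemma restrict_out:
  "x \<notin> cfg d I \<or> y \<notin> cfg d I \<Longrightarrow> restrict_op n d rho I B x y = 0"
  by (auto simp: restrict_op_def mmul_def)

lemma restrict_in:
  assumes "x \<in> cfg d I" "y \<in> cfg d I"
  shows "restrict_op n d rho I B x y =
    (\<Sum>z2\<in>cfg d I. (\<Sum>z1\<in>cfg d I. supp_proj n d rho I x z1 * B z1 z2) * supp_proj n d rho I z2 y)"
  using assms by (auto simp: restrict_op_def mmul_def intro!: sum.cong)

lemma restrict_in2:
  assumes "x \<in> cfg d I" "y \<in> cfg d I"
  shows "restrict_op n d rho I B x y =
    (\<Sum>c\<in>cfg d I. \<Sum>e\<in>cfg d I. supp_proj n d rho I x c * B c e * supp_proj n d rho I e y)"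
proof -
  have "restrict_op n d rho I B x y =
    (\<Sum>e\<in>cfg d I. \<Sum>c\<in>cfg d I. supp_proj n d rho I x c * B c e * supp_proj n d rho I e y)"
    unfolding restrict_in[OF assms] by (simp add: sum_distrib_right)
  also have "\<dots> = (\<Sum>c\<in>cfg d I. \<Sum>e\<in>cfg d I. supp_proj n d rho I x c * B c e * supp_proj n d rho I e y)"
    by (rule sum.swap)
  finally show ?thesis .
qed

definition phi :: "(midx \<Rightarrow> complex) \<Rightarrow> (nat \<Rightarrow> nat) \<Rightarrow> nat set \<Rightarrow> nat set \<Rightarrow> op \<Rightarrow> op" where
  "phi psi d I J A = (\<lambda>z w. if z \<in> cfg d J \<and> w \<in> cfg d J then
     (\<Sum>x\<in>cfg d I. \<Sum>x'\<in>cfg d I. psi (merge I x z) * A x' x * cnj (psi (merge I x' w))) else 0)"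

lemma phi_in:
  assumes I: "I \<subseteq> {1..n}"
  shows "restrict_op n d (pure_state psi) ({1..n}-I) (phi psi d I ({1..n}-I) A) = phi psi d I ({1..n}-I) A"
proof (intro ext)
  fix z w
  let ?J = "{1..n} - I"
  let ?CJ = "cfg d ?J" let ?CI = "cfg d I"
  let ?K = "\<lambda>z x. psi (merge I x z)"
  let ?s = "supp_proj n d (pure_state psi) ?J"
  have fI: "finite I" using I finite_subset by blast
  have fCI: "finite ?CI" by (rule finite_cfg[OF fI])
  have fCJ: "finite ?CJ" by (rule finite_cfg) simp
  have P: "isproj ?CJ (ap ?CJ (gram ?CJ ?CI ?K) ` vecsC ?CJ) ?s"
    using sp_proj[of ?J d n "pure_state psi"] ptrace_J[OF I, of d psi] by simp
  have colK: "\<And>x z. x \<in> ?CI \<Longrightarrow> z \<in> ?CJ \<Longrightarrow> (\<Sum>z'\<in>?CJ. ?s z z' * ?K z' x) = ?K z x"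
    by (rule gram_col[OF fCJ fCI P])
  have herm: "\<And>a b. ?s a b = cnj (?s b a)" by (rule proj_herm[OF fCJ P])
  show "restrict_op n d (pure_state psi) ?J (phi psi d I ?J A) z w = phi psi d I ?J A z w"
  proof (cases "z \<in> ?CJ \<and> w \<in> ?CJ")
    case False thus ?thesis by (auto simp: restrict_out phi_def)
  next
    case True
    have "restrict_op n d (pure_state psi) ?J (phi psi d I ?J A) z w
      = (\<Sum>z2\<in>?CJ. (\<Sum>z1\<in>?CJ. ?s z z1 * (\<Sum>x\<in>?CI. \<Sum>x'\<in>?CI. ?K z1 x * A x' x * cnj (?K z2 x'))) * ?s z2 w)"
      unfolding restrict_in[OF True[THEN conjunct1] True[THEN conjunct2]]
      by (intro sum.cong refl arg_cong2[where f="(*)"]) (auto simp: phi_def)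
    also have "\<dots> = (\<Sum>x\<in>?CI. \<Sum>x'\<in>?CI. (\<Sum>z1\<in>?CJ. ?s z z1 * ?K z1 x) * A x' x * (\<Sum>z2\<in>?CJ. cnj (?K z2 x') * ?s z2 w))"
      by (rule rearr[OF fCJ fCI, where h="\<lambda>x x'. A x' x"])
    also have "\<dots> = (\<Sum>x\<in>?CI. \<Sum>x'\<in>?CI. ?K z x * A x' x * cnj (?K w x'))"
    proof (intro sum.cong refl)
      fix x x' assume x: "x \<in> ?CI" and x': "x' \<in> ?CI"
      have "(\<Sum>z2\<in>?CJ. cnj (?K z2 x') * ?s z2 w) = cnj (\<Sum>z2\<in>?CJ. ?s w z2 * ?K z2 x')"
        by (subst herm) (simp add: mult.commute)
      also have "\<dots> = cnj (?K w x')" using colK[OF x'] True by simp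
      finally show "(\<Sum>z1\<in>?CJ. ?s z z1 * ?K z1 x) * A x' x * (\<Sum>z2\<in>?CJ. cnj (?K z2 x') * ?s z2 w)
          = ?K z x * A x' x * cnj (?K w x')" using colK[OF x] True by simp
    qed
    also have "\<dots> = phi psi d I ?J A z w" using True by (simp add: phi_def)
    finally show ?thesis .
  qed
qed



lemma phi_inj0:
  assumes I: "I \<subseteq> {1..n}"
    and phi0: "phi psi d I ({1..n}-I) (restrict_op n d (pure_state psi) I B) = (\<lambda>z w. 0)"
  shows "restrict_op n d (pure_state psi) I B = (\<lambda>x y. 0)"
proof (intro ext)
  fix x y
  let ?A = "restrict_op n d (pure_state psi) I B"
  let ?J = "{1..n} - I"
  let ?CJ = "cfg d ?J" let ?CI = "cfg d I"
  let ?M = "\<lambda>x z. psi (merge I x z)"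
  let ?s = "supp_proj n d (pure_state psi) I"
  have fI: "finite I" using I finite_subset by blast
  have fCI: "finite ?CI" by (rule finite_cfg[OF fI])
  have fCJ: "finite ?CJ" by (rule finite_cfg) simp
  have P: "isproj ?CI (ap ?CI (gram ?CI ?CJ ?M) ` vecsC ?CI) ?s"
    using sp_proj[OF fI, of d n "pure_state psi"] ptrace_I[of n d I psi] by simp
  have herm: "\<And>a b. ?s a b = cnj (?s b a)" by (rule proj_herm[OF fCI P])
  have idem: "\<And>a c. (\<Sum>b\<in>?CI. ?s a b * ?s b c) = ?s a c" by (rule proj_idem[OF fCI P])
  have colspan: "\<exists>\<alpha>. \<forall>b\<in>?CI. ?s b y0 = (\<Sum>z\<in>?CJ. ?M b z * \<alpha> z)" if y0: "y0 \<in> ?CI" for y0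
  proof -
    have "ap ?CI ?s (\<lambda>z. if z = y0 then 1 else 0) \<in> ap ?CI (gram ?CI ?CJ ?M) ` vecsC ?CI"
      using P delta_vecs[OF y0] unfolding isproj_def by blast
    hence "col ?CI ?s y0 \<in> ap ?CI (gram ?CI ?CJ ?M) ` vecsC ?CI" using ap_delta[OF y0 fCI] by simp
    then obtain \<alpha> where "\<forall>b\<in>?CI. col ?CI ?s y0 b = (\<Sum>z\<in>?CJ. ?M b z * \<alpha> z)"
      using gram_img[OF fCI fCJ] by blast
    thus ?thesis by (auto simp: col_def)
  qed
  show "?A x y = 0"
  proof (cases "x \<in> ?CI \<and> y \<in> ?CI")
    case False thus ?thesis by (simp add: restrict_out)
  next
    case True
    hence x: "x \<in> ?CI" and y: "y \<in> ?CI" by auto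
    have "?A x y = (\<Sum>b\<in>?CI. (\<Sum>a\<in>?CI. ?s x a * (\<Sum>c\<in>?CI. \<Sum>e\<in>?CI. ?s a c * B c e * ?s e b)) * ?s b y)"
      by (simp add: rearr[OF fCI fCI] idem restrict_in2[OF x y])
    also have "\<dots> = (\<Sum>b\<in>?CI. (\<Sum>a\<in>?CI. ?s x a * ?A a b) * ?s b y)"
      by (intro sum.cong refl arg_cong2[where f="(*)"]) (simp_all add: restrict_in2)
    also have "\<dots> = (\<Sum>b\<in>?CI. \<Sum>a\<in>?CI. ?s b y * ?A a b * ?s x a)"
      by (simp add: sum_distrib_left sum_distrib_right mult_ac)
    finally have Axy: "?A x y = (\<Sum>b\<in>?CI. \<Sum>a\<in>?CI. ?s b y * ?A a b * ?s x a)" .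
    obtain \<alpha> where \<alpha>: "\<forall>b\<in>?CI. ?s b y = (\<Sum>z\<in>?CJ. ?M b z * \<alpha> z)" using colspan[OF y] by blast
    obtain \<beta> where \<beta>: "\<forall>b\<in>?CI. ?s b x = (\<Sum>z\<in>?CJ. ?M b z * \<beta> z)" using colspan[OF x] by blast
    have "0 = (\<Sum>z2\<in>?CJ. (\<Sum>z1\<in>?CJ. \<alpha> z1 * phi psi d I ?J ?A z1 z2) * cnj (\<beta> z2))"
      by (simp only: phi0) simp
    also have "\<dots> = (\<Sum>z2\<in>?CJ. (\<Sum>z1\<in>?CJ. \<alpha> z1 * (\<Sum>x1\<in>?CI. \<Sum>x'\<in>?CI. ?M x1 z1 * ?A x' x1 * cnj (?M x' z2))) * cnj (\<beta> z2))"
      by (intro sum.cong refl arg_cong2[where f="(*)"]) (simp_all add: phi_def)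
    also have "\<dots> = (\<Sum>x1\<in>?CI. \<Sum>x'\<in>?CI. (\<Sum>z1\<in>?CJ. \<alpha> z1 * ?M x1 z1) * ?A x' x1 * (\<Sum>z2\<in>?CJ. cnj (?M x' z2) * cnj (\<beta> z2)))"
      by (rule rearr[OF fCJ fCI, where h="\<lambda>x x'. ?A x' x" and g="\<lambda>z1 x. ?M x z1"])
    also have "\<dots> = (\<Sum>x1\<in>?CI. \<Sum>x'\<in>?CI. ?s x1 y * ?A x' x1 * ?s x x')"
    proof (intro sum.cong refl)
      fix x1 x' assume x1: "x1 \<in> ?CI" and x': "x' \<in> ?CI"
      have "(\<Sum>z1\<in>?CJ. \<alpha> z1 * ?M x1 z1) = ?s x1 y" using \<alpha> x1 by (simp add: mult.commute)
      moreover have "(\<Sum>z2\<in>?CJ. cnj (?M x' z2) * cnj (\<beta> z2)) = ?s x x'"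
        using \<beta> x' herm[of x x'] by simp
      ultimately show "(\<Sum>z1\<in>?CJ. \<alpha> z1 * ?M x1 z1) * ?A x' x1 * (\<Sum>z2\<in>?CJ. cnj (?M x' z2) * cnj (\<beta> z2))
          = ?s x1 y * ?A x' x1 * ?s x x'" by simp
    qed
    finally show ?thesis using Axy by simp
  qed
qed



lemma vs_cscale: "vector_space cscale"
  by unfold_locales (intro ext; simp add: cscale_def algebra_simps)+

interpretation V: vector_space cscale by (rule vs_cscale)

lemma dim_img:
  assumes lin: "Vector_Spaces.linear cscale cscale f" and fi: "inj_on f (V.span S)"
  shows "V.dim (f ` S) = V.dim S"
proof -
  interpret lf: Vector_Spaces.linear cscale cscale f by fact
  obtain B where B: "B \<subseteq> S" "V.independent B" "S \<subseteq> V.span B" "card B = V.dim S"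
    using V.basis_exists[of S] by metis
  then have "V.span S = V.span B"
    using V.span_mono[of B S] V.span_mono[of S "V.span B"] V.span_span[of B] by auto
  moreover have "card (f ` B) = card B"
    using card_image[of f B] inj_on_subset[of f "V.span S" B] B V.span_superset fi by auto
  moreover have "(f ` B) \<subseteq> (f ` S)"
    using B by auto
  ultimately show ?thesis
    by (metis B(2) B(4) fi lf.dependent_inj_imageD lf.span_image V.dim_eq_card_independent V.dim_span)
qed

lemma dim_mono_fin:
  assumes "V' \<subseteq> V" "V \<subseteq> V.span W" "finite W"
  shows "V.dim V' \<le> V.dim V"
proof -
  obtain A where A: "A \<subseteq> V" "V.independent A" "V \<subseteq> V.span A" "card A = V.dim V"
    using V.basis_exists[of V] by metis
  have "A \<subseteq> V.span W" using A(1) assms(2) by blast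
  hence fA: "finite A" using V.independent_span_bound[OF assms(3) A(2)] by blast
  have "V' \<subseteq> V.span A" using assms(1) A(3) by blast
  hence "V.dim V' \<le> card A" by (rule V.dim_le_card[OF _ fA])
  thus ?thesis using A(4) by simp
qed



lemma phi_add: "phi psi d I J (A + B) = phi psi d I J A + phi psi d I J B"
proof (intro ext)
  fix z w show "phi psi d I J (A + B) z w = (phi psi d I J A + phi psi d I J B) z w"
    by (simp add: phi_def distrib_left distrib_right sum.distrib)
qed

lemma phi_diff: "phi psi d I J (A - B) = phi psi d I J A - phi psi d I J B"
proof (intro ext)
  fix z w show "phi psi d I J (A - B) z w = (phi psi d I J A - phi psi d I J B) z w"
    by (simp add: phi_def right_diff_distrib left_diff_distrib sum_subtractf)
qed

lemma phi_scale: "phi psi d I J (\<lambda>x y. c * A x y) = (\<lambda>z w. c * phi psi d I J A z w)"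
proof (intro ext)
  fix z w show "phi psi d I J (\<lambda>x y. c * A x y) z w = c * phi psi d I J A z w"
    by (simp add: phi_def sum_distrib_left mult_ac)
qed

lemma restrict_add:
  "restrict_op n d rho I (B1 + B2) = restrict_op n d rho I B1 + restrict_op n d rho I B2"
proof (intro ext)
  fix x y show "restrict_op n d rho I (B1 + B2) x y = (restrict_op n d rho I B1 + restrict_op n d rho I B2) x y"
    by (cases "x \<in> cfg d I \<and> y \<in> cfg d I")
       (auto simp: restrict_in restrict_out distrib_left distrib_right sum.distrib)
qed

lemma restrict_diff:
  "restrict_op n d rho I (B1 - B2) = restrict_op n d rho I B1 - restrict_op n d rho I B2"
proof (intro ext)
  fix x y show "restrict_op n d rho I (B1 - B2) x y = (restrict_op n d rho I B1 - restrict_op n d rho I B2) x y"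
    by (cases "x \<in> cfg d I \<and> y \<in> cfg d I")
       (auto simp: restrict_in restrict_out right_diff_distrib left_diff_distrib sum_subtractf)
qed

lemma restrict_scale:
  "restrict_op n d rho I (\<lambda>x y. c * B x y) = (\<lambda>x y. c * restrict_op n d rho I B x y)"
proof (intro ext)
  fix x y show "restrict_op n d rho I (\<lambda>x y. c * B x y) x y = c * restrict_op n d rho I B x y"
    by (cases "x \<in> cfg d I \<and> y \<in> cfg d I")
       (auto simp: restrict_in restrict_out sum_distrib_left sum_distrib_right mult_ac)
qed

lemma restrict_zero: "restrict_op n d rho I (\<lambda>x y. 0) = (\<lambda>x y. 0)"
  using restrict_scale[of n d rho I 0 "\<lambda>x y. 0"] by simp

lemma zero_op: "(0 :: op) = (\<lambda>x y. 0)" by (intro ext) simp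

lemma OmD1: "F \<in> Omega n d rho k \<Longrightarrow> I \<subseteq> {1..n} \<Longrightarrow> card I = k \<Longrightarrow> \<exists>B\<in>ops d I. F I = restrict_op n d rho I B"
  unfolding Omega_def by blast
lemma OmD2: "F \<in> Omega n d rho k \<Longrightarrow> \<not> (I \<subseteq> {1..n} \<and> card I = k) \<Longrightarrow> F I = (\<lambda>x y. 0)"
  unfolding Omega_def by blast
lemma OmI: "(\<And>I. I \<subseteq> {1..n} \<Longrightarrow> card I = k \<Longrightarrow> \<exists>B\<in>ops d I. F I = restrict_op n d rho I B) \<Longrightarrow>
   (\<And>I. \<not> (I \<subseteq> {1..n} \<and> card I = k) \<Longrightarrow> F I = (\<lambda>x y. 0)) \<Longrightarrow> F \<in> Omega n d rho k"
  unfolding Omega_def by blast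
lemma Om_sub: "V.subspace (Omega n d rho k)"
  unfolding V.subspace_def
proof (intro conjI ballI allI)
  show "0 \<in> Omega n d rho k"
  proof (rule OmI)
    fix I
    show "\<exists>B\<in>ops d I. 0 I = restrict_op n d rho I B"
    proof (rule bexI[of _ "\<lambda>x y. 0"])
      show "0 I = restrict_op n d rho I (\<lambda>x y. 0)" unfolding restrict_zero by (intro ext) simp
    qed (simp add: ops_def)
    show "0 I = (\<lambda>x y. 0)" by (intro ext) simp
  qed
next
  fix F G assume F: "F \<in> Omega n d rho k" and G: "G \<in> Omega n d rho k"
  show "F + G \<in> Omega n d rho k"
  proof (rule OmI)
    fix I assume c: "I \<subseteq> {1..n}" "card I = k"
    obtain B1 where B1: "B1 \<in> ops d I" "F I = restrict_op n d rho I B1" using OmD1[OF F c] by blast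
    obtain B2 where B2: "B2 \<in> ops d I" "G I = restrict_op n d rho I B2" using OmD1[OF G c] by blast
    have "B1 + B2 \<in> ops d I" using B1 B2 by (auto simp: ops_def)
    moreover have "(F + G) I = restrict_op n d rho I (B1 + B2)" using B1 B2 by (simp add: restrict_add)
    ultimately show "\<exists>B\<in>ops d I. (F + G) I = restrict_op n d rho I B" by blast
  next
    fix I assume c: "\<not> (I \<subseteq> {1..n} \<and> card I = k)"
    have "F I = (\<lambda>x y. 0)" "G I = (\<lambda>x y. 0)" using OmD2[OF F c] OmD2[OF G c] by blast+
    thus "(F + G) I = (\<lambda>x y. 0)" by (intro ext) simp
  qed
next
  fix c F assume F: "F \<in> Omega n d rho k"
  show "cscale c F \<in> Omega n d rho k"
  proof (rule OmI)
    fix I assume cI: "I \<subseteq> {1..n}" "card I = k"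
    obtain B where B: "B \<in> ops d I" "F I = restrict_op n d rho I B" using OmD1[OF F cI] by blast
    have "(\<lambda>x y. c * B x y) \<in> ops d I" using B by (auto simp: ops_def)
    moreover have "cscale c F I = restrict_op n d rho I (\<lambda>x y. c * B x y)"
      using B by (simp add: restrict_scale cscale_def)
    ultimately show "\<exists>B\<in>ops d I. cscale c F I = restrict_op n d rho I B" by blast
  next
    fix I assume cI: "\<not> (I \<subseteq> {1..n} \<and> card I = k)"
    have "F I = (\<lambda>x y. 0)" using OmD2[OF F cI] by blast
    thus "cscale c F I = (\<lambda>x y. 0)" by (intro ext) (simp add: cscale_def)
  qed
qed



definition Phi :: "nat \<Rightarrow> (nat \<Rightarrow> nat) \<Rightarrow> (midx \<Rightarrow> complex) \<Rightarrow> nat \<Rightarrow> (nat set \<Rightarrow> op) \<Rightarrow> (nat set \<Rightarrow> op)" where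
  "Phi n d psi k F = (\<lambda>J. if J \<subseteq> {1..n} \<and> card J = n - k
      then phi psi d ({1..n} - J) J (F ({1..n} - J)) else (\<lambda>x y. 0))"

lemma Phi_lin: "Vector_Spaces.linear cscale cscale (Phi n d psi k)"
  unfolding Vector_Spaces.linear_iff
proof (intro conjI allI)
  show "vector_space cscale" by (rule vs_cscale)
  show "vector_space cscale" by (rule vs_cscale)
next
  fix F G
  show "Phi n d psi k (F + G) = Phi n d psi k F + Phi n d psi k G"
  proof (intro ext)
    fix J x y
    show "Phi n d psi k (F + G) J x y = (Phi n d psi k F + Phi n d psi k G) J x y"
      by (simp add: Phi_def phi_add)
  qed
next
  fix c F
  show "Phi n d psi k (cscale c F) = cscale c (Phi n d psi k F)"
  proof (intro ext)
    fix J x y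
    have e: "cscale c F ({1..n} - J) = (\<lambda>x y. c * F ({1..n} - J) x y)" by (simp add: cscale_def)
    show "Phi n d psi k (cscale c F) J x y = cscale c (Phi n d psi k F) J x y"
      by (simp add: Phi_def e phi_scale cscale_def)
  qed
qed

lemma card_compl:
  assumes "J \<subseteq> {1..n}" "card J = n - k" "k \<le> n"
  shows "card ({1..n} - J) = k"
proof -
  have "finite J" using assms(1) finite_subset by blast
  hence "card ({1..n} - J) = n - card J" using assms(1) by (simp add: card_Diff_subset)
  thus ?thesis using assms by simp
qed

lemma Phi_into:
  assumes k: "k \<le> n" and F: "F \<in> Omega n d (pure_state psi) k"
  shows "Phi n d psi k F \<in> Omega n d (pure_state psi) (n - k)"
proof (rule OmI)
  fix J assume J: "J \<subseteq> {1..n}" "card J = n - k"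
  let ?I = "{1..n} - J"
  have I: "?I \<subseteq> {1..n}" by blast
  have JI: "J = {1..n} - ?I" using J(1) by blast
  have "restrict_op n d (pure_state psi) ({1..n} - ?I) (phi psi d ?I ({1..n} - ?I) (F ?I))
      = phi psi d ?I ({1..n} - ?I) (F ?I)" by (rule phi_in[OF I])
  hence r: "restrict_op n d (pure_state psi) J (phi psi d ?I J (F ?I)) = phi psi d ?I J (F ?I)"
    unfolding JI[symmetric] .
  have P: "Phi n d psi k F J = phi psi d ?I J (F ?I)" using J by (simp add: Phi_def)
  have "phi psi d ?I J (F ?I) \<in> ops d J" by (auto simp: ops_def phi_def)
  thus "\<exists>B\<in>ops d J. Phi n d psi k F J = restrict_op n d (pure_state psi) J B"
    using r P by metis
next
  fix J assume nc: "\<not> (J \<subseteq> {1..n} \<and> card J = n - k)"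
  show "Phi n d psi k F J = (\<lambda>x y. 0)" unfolding Phi_def by (rule if_not_P[OF nc])
qed

lemma Phi_inj:
  assumes k: "k \<le> n"
  shows "inj_on (Phi n d psi k) (Omega n d (pure_state psi) k)"
proof (rule inj_onI)
  fix F G assume F: "F \<in> Omega n d (pure_state psi) k" and G: "G \<in> Omega n d (pure_state psi) k"
    and eq: "Phi n d psi k F = Phi n d psi k G"
  show "F = G"
  proof (rule ext)
    fix I
    show "F I = G I"
    proof (cases "I \<subseteq> {1..n} \<and> card I = k")
      case False thus ?thesis using OmD2[OF F False] OmD2[OF G False] by simp
    next
      case True
      hence I: "I \<subseteq> {1..n}" "card I = k" by auto
      let ?J = "{1..n} - I"
      have fI: "finite I" using I(1) finite_subset by blast
      have cJ: "card ?J = n - k" using I fI by (simp add: card_Diff_subset)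
      have IJ: "{1..n} - ?J = I" using I(1) by blast
      obtain B1 where B1: "B1 \<in> ops d I" "F I = restrict_op n d (pure_state psi) I B1" using OmD1[OF F I] by blast
      obtain B2 where B2: "B2 \<in> ops d I" "G I = restrict_op n d (pure_state psi) I B2" using OmD1[OF G I] by blast
      have "Phi n d psi k F ?J = phi psi d I ?J (F I)" using cJ IJ by (simp add: Phi_def)
      moreover have "Phi n d psi k G ?J = phi psi d I ?J (G I)" using cJ IJ by (simp add: Phi_def)
      ultimately have "phi psi d I ?J (F I) = phi psi d I ?J (G I)" using eq by simp
      hence "phi psi d I ?J (restrict_op n d (pure_state psi) I (B1 - B2)) = 0"
        by (simp add: restrict_diff phi_diff B1 B2)
      hence "phi psi d I ?J (restrict_op n d (pure_state psi) I (B1 - B2)) = (\<lambda>z w. 0)"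
        by (simp add: zero_op)
      hence "restrict_op n d (pure_state psi) I (B1 - B2) = (\<lambda>x y. 0)" by (rule phi_inj0[OF I(1)])
      hence "F I - G I = 0" by (simp add: restrict_diff B1 B2 zero_op)
      thus ?thesis by simp
    qed
  qed
qed



definition unitF :: "nat set \<Rightarrow> midx \<Rightarrow> midx \<Rightarrow> (nat set \<Rightarrow> op)" where
  "unitF I x y = (\<lambda>I' a b. if I' = I \<and> a = x \<and> b = y then 1 else 0)"

definition Sig :: "nat \<Rightarrow> (nat \<Rightarrow> nat) \<Rightarrow> (nat set \<times> midx \<times> midx) set" where
  "Sig n d = (SIGMA I:Pow {1..n}. cfg d I \<times> cfg d I)"

lemma finite_Sig: "finite (Sig n d)"
  unfolding Sig_def
proof (rule finite_SigmaI)
  show "finite (Pow {1..n})" by simp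
  fix I assume "I \<in> Pow {1..n}"
  hence "finite I" using finite_subset[of I "{1..n}"] by auto
  thus "finite (cfg d I \<times> cfg d I)" using finite_cfg by blast
qed

lemma sum_fun_app: "(sum f A) x = (\<Sum>a\<in>A. f a x)"
  by (induction A rule: infinite_finite_induct) simp_all

lemma Om_span:
  assumes F: "F \<in> Omega n d rho m"
  shows "F \<in> V.span ((\<lambda>p. unitF (fst p) (fst (snd p)) (snd (snd p))) ` Sig n d)"
proof -
  let ?E = "(\<lambda>p. unitF (fst p) (fst (snd p)) (snd (snd p))) ` Sig n d"
  have eq: "F = (\<Sum>p\<in>Sig n d. cscale (F (fst p) (fst (snd p)) (snd (snd p))) (unitF (fst p) (fst (snd p)) (snd (snd p))))"
  proof (intro ext)
    fix I a b
    have "(\<Sum>p\<in>Sig n d. cscale (F (fst p) (fst (snd p)) (snd (snd p))) (unitF (fst p) (fst (snd p)) (snd (snd p)))) I a b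
        = (\<Sum>p\<in>Sig n d. F (fst p) (fst (snd p)) (snd (snd p)) * unitF (fst p) (fst (snd p)) (snd (snd p)) I a b)"
      by (simp add: sum_fun_app cscale_def)
    also have "\<dots> = (\<Sum>p\<in>Sig n d. if p = (I, a, b) then F I a b else 0)"
      by (intro sum.cong refl) (auto simp: unitF_def)
    also have "\<dots> = (if (I, a, b) \<in> Sig n d then F I a b else 0)"
      by (rule sum.delta[OF finite_Sig])
    also have "\<dots> = F I a b"
    proof (cases "(I, a, b) \<in> Sig n d")
      case False
      show ?thesis
      proof (cases "I \<subseteq> {1..n} \<and> card I = m")
        case True
        then obtain B where "F I = restrict_op n d rho I B" using OmD1[OF F] by blast
        moreover have "a \<notin> cfg d I \<or> b \<notin> cfg d I" using False True by (auto simp: Sig_def)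
        ultimately show ?thesis using False by (simp add: restrict_out)
      next
        case c: False
        show ?thesis using OmD2[OF F c] False by simp
      qed
    qed simp
    finally show "F I a b = (\<Sum>p\<in>Sig n d. cscale (F (fst p) (fst (snd p)) (snd (snd p))) (unitF (fst p) (fst (snd p)) (snd (snd p)))) I a b"
      by simp
  qed
  have "(\<Sum>p\<in>Sig n d. cscale (F (fst p) (fst (snd p)) (snd (snd p))) (unitF (fst p) (fst (snd p)) (snd (snd p)))) \<in> V.span ?E"
    by (intro V.span_sum V.span_scale V.span_base) blast
  thus ?thesis using eq by simp
qed

lemma dim_le:
  assumes k: "k \<le> n"
  shows "cdim (Omega n d (pure_state psi) k) \<le> cdim (Omega n d (pure_state psi) (n - k))"
proof -
  let ?Ok = "Omega n d (pure_state psi) k"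
  let ?Ol = "Omega n d (pure_state psi) (n - k)"
  have sp: "V.span ?Ok = ?Ok" using Om_sub V.span_eq_iff by blast
  have "V.dim (Phi n d psi k ` ?Ok) = V.dim ?Ok"
    by (rule dim_img[OF Phi_lin]) (simp only: sp, rule Phi_inj[OF k])
  moreover have "V.dim (Phi n d psi k ` ?Ok) \<le> V.dim ?Ol"
  proof (rule dim_mono_fin)
    show "Phi n d psi k ` ?Ok \<subseteq> ?Ol" using Phi_into[OF k] by blast
    show "?Ol \<subseteq> V.span ((\<lambda>p. unitF (fst p) (fst (snd p)) (snd (snd p))) ` Sig n d)"
      using Om_span by blast
    show "finite ((\<lambda>p. unitF (fst p) (fst (snd p)) (snd (snd p))) ` Sig n d)"
      using finite_Sig by blast
  qed
  ultimately show ?thesis unfolding cdim_def by simp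
qed

theorem corollary1:
  fixes n :: nat and d :: "nat \<Rightarrow> nat" and psi :: "midx \<Rightarrow> complex" and k :: nat
  assumes "psi \<in> vecs d {1..n}"
    and "(\<Sum>x\<in>cfg d {1..n}. (cmod (psi x))\<^sup>2) = 1"
    and "1 \<le> k" and "k \<le> n - 1"
  shows "cdim (Omega n d (pure_state psi) k) = cdim (Omega n d (pure_state psi) (n - k))"
proof -
  have k: "k \<le> n" using assms(4) by simp
  have "cdim (Omega n d (pure_state psi) (n - k)) \<le> cdim (Omega n d (pure_state psi) (n - (n - k)))"
    by (rule dim_le) simp
  moreover have "n - (n - k) = k" using k by simp
  ultimately show ?thesis using dim_le[OF k, of d psi] by simp
qed

end
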